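(* Let $f:\mathbb{N}\to\{z\in\mathbb{C}:|z|\le1\}$ be a multiplicative function and $g:=1\ast f$. Then for any $x\ge1$ and $w\ge1$, $$\tilde M_g(x)-\tilde M_g(x/w)\ll\log(2w).$$
   Context: $(1\ast f)(n)=\sum_{d\mid n}f(d)$; $\tilde M_g(y):=\frac1y\sum_{n\le y}g(n)$. The implied constant is absolute. *)

theory Defs
  imports Complex_Main
begin

definition multiplicative :: "(nat \<Rightarrow> complex) \<Rightarrow> bool" where
  "multiplicative f \<longleftrightarrow> f 1 = 1 \<and>
     (\<forall>m n. m > 0 \<longrightarrow> n > 0 \<longrightarrow> coprime m n \<longrightarrow> f (m * n) = f m * f n)"

definition one_conv :: "(nat \<Rightarrow> complex) \<Rightarrow> nat \<Rightarrow> complex" where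
  "one_conv f n = (\<Sum>d\<in>{d. d dvd n}. f d)"

definition Mtilde :: "(nat \<Rightarrow> complex) \<Rightarrow> real \<Rightarrow> complex" where
  "Mtilde g y = of_real (1 / y) * (\<Sum>n\<in>{1..nat \<lfloor>y\<rfloor>}. g n)"

end

theory Submission
  imports Defs
begin

lemma card_mult: assumes "d \<ge> (1::nat)"
  shows "card {n\<in>{1..N}. d dvd n} = N div d"
proof -
  have "{n\<in>{1..N}. d dvd n} = (\<lambda>k. d*k) ` {1..N div d}"
  proof (safe)
    fix n assume "n \<in> {1..N}" "d dvd n"
    then obtain k where k: "n = d*k" by blast
    with \<open>n \<in> {1..N}\<close> assms have "k \<ge> 1" "d*k \<le> N" by auto
    hence "k \<le> N div d" using assms by (metis div_le_mono nonzero_mult_div_cancel_left not_one_le_zero)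
    thus "n \<in> (\<lambda>k. d*k) ` {1..N div d}" using k \<open>k\<ge>1\<close> by auto
  next
    fix k assume "k \<in> {1..N div d}"
    hence "d * k \<le> d * (N div d)" "k\<ge>1" by auto
    moreover have "d * (N div d) \<le> N" by simp
    ultimately have "d*k \<le> N" by linarith
    thus "d*k \<in> {1..N}" using \<open>k\<ge>1\<close> assms by auto
  qed auto
  moreover have "inj_on (\<lambda>k. d*k) {1..N div d}" using assms by (auto simp: inj_on_def)
  ultimately show ?thesis by (simp add: card_image)
qed

lemma swap:
  "(\<Sum>n\<in>{1..N}. one_conv f n) = (\<Sum>d\<in>{1..N}. f d * of_nat (N div d))"
proof -
  have "(\<Sum>n\<in>{1..N}. one_conv f n) = (\<Sum>n\<in>{1..N}. \<Sum>d\<in>{1..N}. if d dvd n then f d else 0)"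
  proof (rule sum.cong[OF refl])
    fix n assume n: "n \<in> {1..N}"
    have "{d. d dvd n} = {d\<in>{1..N}. d dvd n}" using n
      by (auto intro: dvd_imp_le dest: dvd_imp_le)
    hence "one_conv f n = sum f {d\<in>{1..N}. d dvd n}" unfolding one_conv_def by simp
    also have "\<dots> = (\<Sum>d\<in>{1..N}. if d dvd n then f d else 0)"
      by (rule sum.inter_filter) simp
    finally show "one_conv f n = (\<Sum>d\<in>{1..N}. if d dvd n then f d else 0)" .
  qed
  also have "\<dots> = (\<Sum>d\<in>{1..N}. \<Sum>n\<in>{1..N}. if d dvd n then f d else 0)"
    by (rule sum.swap)
  also have "\<dots> = (\<Sum>d\<in>{1..N}. f d * of_nat (N div d))"
  proof (rule sum.cong[OF refl])
    fix d assume "d \<in> {1..N}"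
    have "(\<Sum>n\<in>{1..N}. if d dvd n then f d else 0) = (\<Sum>n\<in>{n\<in>{1..N}. d dvd n}. f d)"
      by (rule sum.inter_filter[symmetric]) simp
    also have "\<dots> = f d * of_nat (N div d)" using card_mult[of d N] \<open>d \<in> {1..N}\<close> by simp
    finally show "(\<Sum>n\<in>{1..N}. if d dvd n then f d else 0) = f d * of_nat (N div d)" .
  qed
  finally show ?thesis .
qed

lemma harm_step: "1 / real (Suc M) \<le> ln (Suc M) - ln M" if "M \<ge> 1" for M :: nat
proof -
  have "ln (real M / real (Suc M)) \<le> real M / real (Suc M) - 1"
    by (rule ln_le_minus_one) (use that in auto)
  also have "\<dots> = - 1 / real (Suc M)" by (simp add: field_simps)
  finally show ?thesis using that by (simp add: ln_div)
qed

lemma harm_bound: "N \<ge> 1 \<Longrightarrow> N \<le> M \<Longrightarrow> (\<Sum>d\<in>{N<..M}. 1 / real d) \<le> ln M - ln N"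
proof (induction M)
  case 0 then show ?case by simp
next
  case (Suc M)
  show ?case
  proof (cases "N = Suc M")
    case True then show ?thesis by simp
  next
    case False
    hence "N \<le> M" using Suc by auto
    have "{N<..Suc M} = insert (Suc M) {N<..M}" using \<open>N \<le> M\<close> by auto
    hence "(\<Sum>d\<in>{N<..Suc M}. 1 / real d) = 1 / real (Suc M) + (\<Sum>d\<in>{N<..M}. 1 / real d)" by simp
    also have "\<dots> \<le> (ln (Suc M) - ln M) + (ln M - ln N)"
      using harm_step[of M] Suc.IH[OF Suc.prems(1) \<open>N \<le> M\<close>] Suc.prems \<open>N \<le> M\<close> by linarith
    finally show ?thesis by simp
  qed
qed

lemma approx:
  fixes f :: "nat \<Rightarrow> complex" and y :: real
  assumes y: "y > 0" and bd: "\<forall>n\<ge>1. norm (f n) \<le> 1"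
  shows "norm (Mtilde (one_conv f) y - (\<Sum>d\<in>{1..nat \<lfloor>y\<rfloor>}. f d / of_nat d)) \<le> 2"
proof -
  define N where "N = nat \<lfloor>y\<rfloor>"
  have Ny: "real N \<le> y" "y < real N + 1" using y unfolding N_def by linarith+
  have "Mtilde (one_conv f) y = of_real (1/y) * (\<Sum>d\<in>{1..N}. f d * of_nat (N div d))"
    unfolding Mtilde_def N_def swap ..
  hence "Mtilde (one_conv f) y - (\<Sum>d\<in>{1..N}. f d / of_nat d)
      = (\<Sum>d\<in>{1..N}. of_real (1/y) * (f d * of_nat (N div d))) - (\<Sum>d\<in>{1..N}. f d / of_nat d)"
    by (simp only: sum_distrib_left)
  also have "\<dots> = (\<Sum>d\<in>{1..N}. of_real (1/y) * (f d * of_nat (N div d)) - f d / of_nat d)"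
    by (simp only: sum_subtractf)
  also have "\<dots> = (\<Sum>d\<in>{1..N}. f d * of_real (real (N div d) / y - 1 / real d))"
    by (rule sum.cong[OF refl]) (simp add: of_real_diff of_real_divide algebra_simps)
  also have "norm \<dots> \<le> (\<Sum>d\<in>{1..N}. norm (f d * of_real (real (N div d) / y - 1 / real d)))"
    by (rule norm_sum)
  also have "\<dots> \<le> (\<Sum>d\<in>{1..N}. 2 / y)"
  proof (rule sum_mono)
    fix d assume d: "d \<in> {1..N}"
    define q where "q = N div d"
    have "d * q \<le> N" unfolding q_def by simp
    moreover have "N < d * q + d"
    proof -
      have "N = d * q + N mod d" unfolding q_def by simp
      moreover have "N mod d < d" using d by simp
      ultimately show ?thesis by linarith
    qed
    ultimately have "real (d * q) \<le> real N" "real N < real (d * q + d)"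
      by (simp_all only: of_nat_le_iff of_nat_less_iff)
    hence h1: "real d * real q \<le> real N" "real N < real d * real q + real d" by simp_all
    have dpos: "real d \<ge> 1" using d by auto
    have a: "0 \<le> y - real d * real q" using h1 Ny by linarith
    have b: "y - real d * real q \<le> 2 * real d" using h1 Ny dpos by linarith
    have eq: "real q / y - 1 / real d = - (y - real d * real q) / (real d * y)"
      using y dpos by (simp add: field_simps)
    have "\<bar>real q / y - 1 / real d\<bar> = (y - real d * real q) / (real d * y)"
      unfolding eq using a y dpos by simp
    also have "\<dots> \<le> (2 * real d) / (real d * y)"
      using b y dpos by (intro divide_right_mono) auto
    also have "\<dots> = 2 / y" using dpos by simp
    finally have c: "\<bar>real q / y - 1 / real d\<bar> \<le> 2 / y" .
    have "norm (f d) \<le> 1" using bd d by auto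
    hence "norm (f d) * \<bar>real q / y - 1 / real d\<bar> \<le> 1 * (2 / y)"
      using c by (intro mult_mono) auto
    thus "norm (f d * of_real (real (N div d) / y - 1 / real d)) \<le> 2 / y"
      unfolding q_def[symmetric] by (simp only: norm_mult norm_of_real)
  qed
  also have "\<dots> = real N * 2 / y" by simp
  also have "\<dots> \<le> 2" using Ny y by (simp add: field_simps)
  finally show ?thesis unfolding N_def .
qed

lemma harm_main:
  fixes x w :: real
  assumes x: "x \<ge> 1" and w: "w \<ge> 1"
  shows "(\<Sum>d\<in>{nat \<lfloor>x/w\<rfloor><..nat \<lfloor>x\<rfloor>}. 1 / real d) \<le> 1 + ln (2 * w)"
proof -
  define M where "M = nat \<lfloor>x\<rfloor>"
  define N where "N = nat \<lfloor>x/w\<rfloor>"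
  have Mx: "real M \<le> x" "M \<ge> 1" using x unfolding M_def by linarith+
  have Nx: "real N \<le> x/w" "x/w < real N + 1" using x w unfolding N_def by auto
  have lw: "ln (2*w) \<ge> 0" using w by simp
  show ?thesis
  proof (cases "N = 0")
    case True
    have "{N<..M} = insert 1 {1<..M}" using True Mx by auto
    hence "(\<Sum>d\<in>{N<..M}. 1 / real d) = 1 + (\<Sum>d\<in>{1<..M}. 1 / real d)" by simp
    also have "\<dots> \<le> 1 + (ln M - ln 1)" using harm_bound[of 1 M] Mx by simp
    also have "\<dots> \<le> 1 + ln (2*w)"
    proof -
      have "x < w" using Nx True w by (simp add: field_simps)
      hence "real M \<le> 2 * w" using Mx by linarith
      thus ?thesis using Mx by simp
    qed
    finally show ?thesis unfolding M_def N_def .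
  next
    case False
    hence N1: "N \<ge> 1" by simp
    have NM: "N \<le> M" unfolding M_def N_def using x w
      by (intro nat_mono floor_mono) (simp add: field_simps)
    have Nlow: "x / (2*w) \<le> real N"
    proof (cases "x/w \<ge> 2")
      case True thus ?thesis using Nx by (simp add: field_simps)
    next
      case False
      have "real N \<ge> 1" using N1 by simp
      hence "2*w*1 \<le> 2*w*real N" using w by (intro mult_left_mono) auto
      moreover have "x < 2*w" using False w by (simp add: field_simps)
      ultimately have "x \<le> 2*w*real N" by linarith
      thus ?thesis using w by (simp add: field_simps)
    qed
    have "(\<Sum>d\<in>{N<..M}. 1 / real d) \<le> ln M - ln N" by (rule harm_bound[OF N1 NM])
    also have "\<dots> = ln (real M / real N)" using N1 NM by (simp add: ln_div)
    also have "\<dots> \<le> ln (2*w)"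
    proof -
      have "real M / real N \<le> x / (x/(2*w))"
        using Mx Nlow x w N1 by (intro frac_le) auto
      also have "\<dots> = 2*w" using x by simp
      finally have "real M / real N \<le> 2*w" .
      moreover have "real M / real N > 0" using Mx N1 by simp
      ultimately show ?thesis by (rule ln_mono)
    qed
    finally show ?thesis unfolding M_def N_def by simp
  qed
qed

lemma tri3: "a = b + c - d \<Longrightarrow> norm (a::complex) \<le> norm b + norm c + norm d"
proof -
  assume "a = b + c - d"
  hence "norm a = norm (b + c - d)" by simp
  moreover have "norm (b + c - d) \<le> norm (b + c) + norm d" by (rule norm_triangle_ineq4)
  moreover have "norm (b + c) \<le> norm b + norm c" by (rule norm_triangle_ineq)
  ultimately show ?thesis by linarith
qed

theorem lemma4p2:
  shows "\<exists>C::real. \<forall>(f::nat \<Rightarrow> complex) (x::real) (w::real).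
           multiplicative f \<longrightarrow> (\<forall>n\<ge>1. norm (f n) \<le> 1) \<longrightarrow> x \<ge> 1 \<longrightarrow> w \<ge> 1 \<longrightarrow>
           norm (Mtilde (one_conv f) x - Mtilde (one_conv f) (x / w)) \<le> C * ln (2 * w)"
proof (intro exI[of _ 11] allI impI)
  fix f :: "nat \<Rightarrow> complex" and x w :: real
  assume bd: "\<forall>n\<ge>1. norm (f n) \<le> 1" and x: "x \<ge> 1" and w: "w \<ge> 1"
  define M where "M = nat \<lfloor>x\<rfloor>"
  define N where "N = nat \<lfloor>x/w\<rfloor>"
  define S where "S = (\<lambda>K. \<Sum>d\<in>{1..K}. f d / of_nat d)"
  have xw: "x / w > 0" using x w by simp
  have NM: "N \<le> M" unfolding M_def N_def using x w
    by (intro nat_mono floor_mono) (simp add: field_simps)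
  have A1: "norm (Mtilde (one_conv f) x - S M) \<le> 2"
    unfolding S_def M_def using approx[of x f] x bd by simp
  have A2: "norm (Mtilde (one_conv f) (x/w) - S N) \<le> 2"
    unfolding S_def N_def using approx[of "x/w" f] xw bd by simp
  have "{1..M} = {1..N} \<union> {N<..M}" using NM by auto
  hence "S M = S N + (\<Sum>d\<in>{N<..M}. f d / of_nat d)"
    unfolding S_def by (subst sum.union_disjoint[symmetric]) auto
  hence "norm (S M - S N) = norm (\<Sum>d\<in>{N<..M}. f d / of_nat d)" by simp
  also have "\<dots> \<le> (\<Sum>d\<in>{N<..M}. norm (f d / of_nat d))" by (rule norm_sum)
  also have "\<dots> \<le> (\<Sum>d\<in>{N<..M}. 1 / real d)"
  proof (rule sum_mono)
    fix d assume "d \<in> {N<..M}"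
    hence "norm (f d) \<le> 1" using bd by auto
    thus "norm (f d / of_nat d) \<le> 1 / real d"
      by (simp add: norm_divide divide_right_mono)
  qed
  also have "\<dots> \<le> 1 + ln (2*w)" unfolding M_def N_def by (rule harm_main[OF x w])
  finally have B: "norm (S M - S N) \<le> 1 + ln (2*w)" .
  have "Mtilde (one_conv f) x - Mtilde (one_conv f) (x / w)
     = (Mtilde (one_conv f) x - S M) + (S M - S N) - (Mtilde (one_conv f) (x/w) - S N)" by simp
  hence "norm (Mtilde (one_conv f) x - Mtilde (one_conv f) (x / w))
     \<le> norm (Mtilde (one_conv f) x - S M) + norm (S M - S N) + norm (Mtilde (one_conv f) (x/w) - S N)"
    using tri3 by metis
  hence C: "norm (Mtilde (one_conv f) x - Mtilde (one_conv f) (x / w)) \<le> 5 + ln (2*w)"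
    using A1 A2 B by linarith
  have "ln (1/2::real) \<le> 1/2 - 1" by (rule ln_le_minus_one) auto
  hence "ln (2::real) \<ge> 1/2" by (simp add: ln_div)
  moreover have "ln (2::real) \<le> ln (2*w)" using w by simp
  ultimately show "norm (Mtilde (one_conv f) x - Mtilde (one_conv f) (x / w)) \<le> 11 * ln (2*w)"
    using C by linarith
qed

end
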